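(* For every graph $G$, $f^-(G+K_1)=f^-(G)$ and $f^+(G+K_1)=f^+(G)$.
   Context: All graphs are finite, simple, undirected and connected. $N[v]=N(v)\cup\{v\}$ is the closed neighbourhood. A chromatic colouring of $G$ is a proper vertex colouring $c:V(G)\to\{c_1,\dots,c_{\chi(G)}\}$. With respect to $c$, a vertex $v$ yields a rainbow neighbourhood if $N[v]$ contains a vertex of each colour $c_1,\dots,c_{\chi(G)}$; $r_\chi(G)$ is the number of such vertices, and $r^-_\chi(G)$, $r^+_\chi(G)$ are its minimum and maximum over all chromatic colourings of $G$. Fading: for a set $F\subseteq V(G)$ (a fade set), the vertices of $F$ receive a transparent colour $c^\circ$ not among $c_1,\dots,c_{\chi(G)}$; after fading, $v$ yields a rainbow neighbourhood iff for every $i$ some vertex of $N[v]\setminus F$ has colour $c_i$. The fading number $f^-(G)$ is the maximum $|F|$ over chromatic colourings $c$ attaining $r_\chi=r^-_\chi(G)$ and fade sets $F$ such that, after fading $F$, the number of vertices yielding rainbow neighbourhoods is still $r^-_\chi(G)$; $f^+(G)$ is defined analogously with $r^+_\chi(G)$. The join $G_1+G_2$ of vertex-disjoint graphs is $G_1\cup G_2$ together with all edges joining a vertex of $G_1$ to a vertex of $G_2$. *)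

theory Defs
  imports Main
begin

definition simple_graph :: "'a set \<Rightarrow> 'a set set \<Rightarrow> bool" where
  "simple_graph V E \<longleftrightarrow> finite V \<and> (\<forall>e\<in>E. \<exists>u v. e = {u, v} \<and> u \<noteq> v \<and> u \<in> V \<and> v \<in> V)"

definition adj_rel :: "'a set set \<Rightarrow> ('a \<times> 'a) set" where
  "adj_rel E = {(u, v). {u, v} \<in> E}"

definition connected_graph :: "'a set \<Rightarrow> 'a set set \<Rightarrow> bool" where
  "connected_graph V E \<longleftrightarrow> simple_graph V E \<and> V \<noteq> {} \<and>
     (\<forall>u\<in>V. \<forall>v\<in>V. (u, v) \<in> (adj_rel E)\<^sup>*)"

definition closed_nbhd :: "'a set \<Rightarrow> 'a set set \<Rightarrow> 'a \<Rightarrow> 'a set" where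
  "closed_nbhd V E v = insert v {u \<in> V. {u, v} \<in> E}"

definition proper_colouring :: "'a set \<Rightarrow> 'a set set \<Rightarrow> ('a \<Rightarrow> nat) \<Rightarrow> nat \<Rightarrow> bool" where
  "proper_colouring V E c k \<longleftrightarrow> (\<forall>v\<in>V. c v \<in> {1..k}) \<and>
     (\<forall>u\<in>V. \<forall>v\<in>V. {u, v} \<in> E \<longrightarrow> c u \<noteq> c v)"

definition chromatic_number :: "'a set \<Rightarrow> 'a set set \<Rightarrow> nat" where
  "chromatic_number V E = (LEAST k. \<exists>c. proper_colouring V E c k)"

definition chromatic_colouring :: "'a set \<Rightarrow> 'a set set \<Rightarrow> ('a \<Rightarrow> nat) \<Rightarrow> bool" where
  "chromatic_colouring V E c \<longleftrightarrow> proper_colouring V E c (chromatic_number V E)"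

text \<open>Number of vertices yielding a rainbow neighbourhood after fading the set F.\<close>
definition rainbow_count :: "'a set \<Rightarrow> 'a set set \<Rightarrow> ('a \<Rightarrow> nat) \<Rightarrow> 'a set \<Rightarrow> nat" where
  "rainbow_count V E c F = card {v \<in> V. \<forall>i \<in> {1..chromatic_number V E}.
       \<exists>u \<in> closed_nbhd V E v - F. c u = i}"

definition r_minus :: "'a set \<Rightarrow> 'a set set \<Rightarrow> nat" where
  "r_minus V E = Min {rainbow_count V E c {} | c. chromatic_colouring V E c}"

definition r_plus :: "'a set \<Rightarrow> 'a set set \<Rightarrow> nat" where
  "r_plus V E = Max {rainbow_count V E c {} | c. chromatic_colouring V E c}"

definition fading_minus :: "'a set \<Rightarrow> 'a set set \<Rightarrow> nat" where
  "fading_minus V E = Max {card F | c F. chromatic_colouring V E c \<and> F \<subseteq> V \<and>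
      rainbow_count V E c {} = r_minus V E \<and> rainbow_count V E c F = r_minus V E}"

definition fading_plus :: "'a set \<Rightarrow> 'a set set \<Rightarrow> nat" where
  "fading_plus V E = Max {card F | c F. chromatic_colouring V E c \<and> F \<subseteq> V \<and>
      rainbow_count V E c {} = r_plus V E \<and> rainbow_count V E c F = r_plus V E}"

text \<open>The join G + K_1, where the K_1 has the new vertex w (not in V).\<close>
definition join_K1_V :: "'a set \<Rightarrow> 'a \<Rightarrow> 'a set" where
  "join_K1_V V w = insert w V"

definition join_K1_E :: "'a set \<Rightarrow> 'a set set \<Rightarrow> 'a \<Rightarrow> 'a set set" where
  "join_K1_E V E w = E \<union> {{w, v} | v. v \<in> V}"

end

theory Submission
  imports Defs
begin

definition shiftc :: "nat \<Rightarrow> ('a \<Rightarrow> nat) \<Rightarrow> 'a \<Rightarrow> nat" where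
  "shiftc j c = (\<lambda>v. if c v > j then c v - 1 else c v)"

lemma sg_finite: "simple_graph V E \<Longrightarrow> finite V"
  by (simp add: simple_graph_def)

lemma sg_edge: "simple_graph V E \<Longrightarrow> e \<in> E \<Longrightarrow> \<exists>u v. e = {u,v} \<and> u \<noteq> v \<and> u \<in> V \<and> v \<in> V"
  by (simp add: simple_graph_def)

lemma sg_noloop: "simple_graph V E \<Longrightarrow> {u, u} \<notin> E"
  unfolding simple_graph_def by (auto simp: doubleton_eq_iff)

lemma proper_exists: assumes "simple_graph V E" shows "\<exists>c. proper_colouring V E c (card V)"
proof -
  have "finite V" using assms sg_finite by blast
  then obtain f where f: "bij_betw f V {0..<card V}" using ex_bij_betw_finite_nat by blast
  have "proper_colouring V E (\<lambda>v. f v + 1) (card V)"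
    unfolding proper_colouring_def
  proof (intro conjI ballI impI)
    fix v assume "v \<in> V" then show "f v + 1 \<in> {1..card V}"
      using f bij_betwE by fastforce
  next
    fix u v assume "u \<in> V" "v \<in> V" "{u, v} \<in> E"
    then have "u \<noteq> v" using sg_noloop[OF assms, of u] by auto
    show "f u + 1 \<noteq> f v + 1" proof
      assume "f u + 1 = f v + 1"
      then have "f u = f v" by simp
      moreover have "inj_on f V" using f by (simp add: bij_betw_def)
      ultimately show False using \<open>u \<noteq> v\<close> \<open>u\<in>V\<close> \<open>v\<in>V\<close> by (simp add: inj_on_def)
    qed
  qed
  then show ?thesis by blast
qed

lemma chi_ex2: "proper_colouring V E c m \<Longrightarrow> \<exists>c. proper_colouring V E c (chromatic_number V E)"
proof -
  assume "proper_colouring V E c m"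
  then have "\<exists>k. \<exists>c. proper_colouring V E c k" by auto
  then show ?thesis unfolding chromatic_number_def by (rule LeastI_ex)
qed

lemma chi_ex: "simple_graph V E \<Longrightarrow> \<exists>c. proper_colouring V E c (chromatic_number V E)"
  using proper_exists chi_ex2 by metis

lemma chi_min: "proper_colouring V E c m \<Longrightarrow> chromatic_number V E \<le> m"
  unfolding chromatic_number_def by (metis Least_le)

lemma shift_proper:
  assumes "proper_colouring V E c m" "j \<in> {1..m}" "\<forall>v\<in>V. c v \<noteq> j"
  shows "proper_colouring V E (shiftc j c) (m - 1)"
proof -
  have A: "\<forall>v\<in>V. c v \<in> {1..m}" and B: "\<forall>u\<in>V. \<forall>v\<in>V. {u, v} \<in> E \<longrightarrow> c u \<noteq> c v"
    using assms(1) unfolding proper_colouring_def by auto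
  show ?thesis unfolding proper_colouring_def shiftc_def
  proof (intro conjI ballI impI)
    fix v assume v: "v \<in> V"
    have "c v \<in> {1..m}" "c v \<noteq> j" using A assms(3) v by auto
    then show "(if c v > j then c v - 1 else c v) \<in> {1..m-1}" using assms(2) by auto
  next
    fix u v assume u: "u \<in> V" and v: "v \<in> V" and e: "{u,v} \<in> E"
    have "c u \<noteq> c v" "c u \<noteq> j" "c v \<noteq> j" using B assms(3) u v e by auto
    then show "(if c u > j then c u - 1 else c u) \<noteq> (if c v > j then c v - 1 else c v)" by auto
  qed
qed

lemma proper_restrict: "proper_colouring V2 E2 c m \<Longrightarrow> V \<subseteq> V2 \<Longrightarrow> E \<subseteq> E2 \<Longrightarrow> proper_colouring V E c m"
  unfolding proper_colouring_def by blast

lemma chromatic_surj: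
  assumes "chromatic_colouring V E c" "i \<in> {1..chromatic_number V E}"
  shows "\<exists>v\<in>V. c v = i"
proof (rule ccontr)
  assume H: "\<not> ?thesis"
  have pc: "proper_colouring V E c (chromatic_number V E)" using assms(1) unfolding chromatic_colouring_def .
  have "\<forall>v\<in>V. c v \<noteq> i" using H by blast
  then have "proper_colouring V E (shiftc i c) (chromatic_number V E - 1)"
    by (rule shift_proper[OF pc assms(2)])
  then have "chromatic_number V E \<le> chromatic_number V E - 1" by (rule chi_min)
  moreover have "chromatic_number V E \<ge> 1" using assms(2) by simp
  ultimately show False by linarith
qed

lemma join_edge_V:
  assumes "simple_graph V E" "w \<notin> V" "u \<in> V" "v \<in> V"
  shows "{u,v} \<in> join_K1_E V E w \<longleftrightarrow> {u,v} \<in> E"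
proof
  assume "{u,v} \<in> join_K1_E V E w"
  then consider "{u,v} \<in> E" | x where "{u,v} = {w,x}" unfolding join_K1_E_def by blast
  then show "{u,v} \<in> E"
  proof cases
    case 1 then show ?thesis .
  next
    case 2
    then have "w \<in> {u,v}" by (metis insertI1)
    then have "w = u \<or> w = v" by simp
    then show ?thesis using assms(2,3,4) by blast
  qed
next
  assume "{u,v} \<in> E" then show "{u,v} \<in> join_K1_E V E w" unfolding join_K1_E_def by (rule UnI1)
qed

lemma join_edge_w1: "v \<in> V \<Longrightarrow> {w,v} \<in> join_K1_E V E w"
  unfolding join_K1_E_def by blast

lemma join_edge_w2: "v \<in> V \<Longrightarrow> {v,w} \<in> join_K1_E V E w"
proof -
  assume "v \<in> V"
  have "{v,w} = {w,v}" by (rule insert_commute)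
  then show ?thesis using join_edge_w1[OF \<open>v \<in> V\<close>] by simp
qed

lemma join_no_ww:
  assumes "simple_graph V E" "w \<notin> V"
  shows "{w,w} \<notin> join_K1_E V E w"
proof
  assume "{w,w} \<in> join_K1_E V E w"
  then consider "{w,w} \<in> E" | x where "{w,w} = {w,x}" "x \<in> V" unfolding join_K1_E_def by blast
  then show False
  proof cases
    case 1 then show ?thesis using sg_noloop[OF assms(1)] by blast
  next
    case 2
    then have "x \<in> {w,w}" by (metis insertI1 insert_commute)
    then have "x = w" by simp
    then show ?thesis using 2(2) assms(2) by simp
  qed
qed

lemma join_extend:
  assumes "simple_graph V E" "w \<notin> V" "proper_colouring V E c k"
  shows "proper_colouring (join_K1_V V w) (join_K1_E V E w) (c(w := k+1)) (k+1)"
  unfolding proper_colouring_def join_K1_V_def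
proof (intro conjI ballI impI)
  fix v assume "v \<in> insert w V" then show "(c(w := k + 1)) v \<in> {1..k + 1}"
    using assms(3) unfolding proper_colouring_def by auto
next
  fix u v assume u: "u \<in> insert w V" and v: "v \<in> insert w V" and e: "{u, v} \<in> join_K1_E V E w"
  show "(c(w := k + 1)) u \<noteq> (c(w := k + 1)) v"
  proof (cases "u = w")
    case True
    then have "v \<noteq> w" using e join_no_ww[OF assms(1,2)] by auto
    then have "v \<in> V" using v by auto
    then have "c v \<le> k" using assms(3) unfolding proper_colouring_def by auto
    then show ?thesis using True \<open>v \<noteq> w\<close> by auto
  next
    case False
    then have "u \<in> V" using u by auto
    show ?thesis
    proof (cases "v = w")
      case True
      then have "c u \<le> k" using assms(3) \<open>u \<in> V\<close> unfolding proper_colouring_def by auto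
      then show ?thesis using True False by auto
    next
      case False2: False
      then have "v \<in> V" using v by auto
      then have "{u,v} \<in> E" using join_edge_V[OF assms(1,2) \<open>u\<in>V\<close>] e by blast
      then have "c u \<noteq> c v" using assms(3) \<open>u\<in>V\<close> \<open>v\<in>V\<close> unfolding proper_colouring_def by auto
      then show ?thesis using False False2 by auto
    qed
  qed
qed

lemma join_proper_w:
  assumes "proper_colouring (join_K1_V V w) (join_K1_E V E w) c m" "v \<in> V"
  shows "c v \<noteq> c w" "c w \<in> {1..m}" "c v \<in> {1..m}"
  using assms join_edge_w2[OF assms(2)] unfolding proper_colouring_def join_K1_V_def by auto

lemma join_shrink:
  assumes "simple_graph V E" "w \<notin> V" "proper_colouring (join_K1_V V w) (join_K1_E V E w) c m"
  shows "proper_colouring V E (shiftc (c w) c) (m - 1)"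
proof -
  have "proper_colouring V E c m"
    using proper_restrict[OF assms(3)] unfolding join_K1_V_def join_K1_E_def by auto
  moreover have "c w \<in> {1..m}" using assms(3) unfolding proper_colouring_def join_K1_V_def by auto
  moreover have "\<forall>v\<in>V. c v \<noteq> c w" using join_proper_w[OF assms(3)] by auto
  ultimately show ?thesis using shift_proper by metis
qed

lemma chi_join:
  assumes "simple_graph V E" "w \<notin> V"
  shows "chromatic_number (join_K1_V V w) (join_K1_E V E w) = chromatic_number V E + 1"
proof -
  obtain c where c: "proper_colouring V E c (chromatic_number V E)" using chi_ex[OF assms(1)] by blast
  have p: "proper_colouring (join_K1_V V w) (join_K1_E V E w) (c(w := chromatic_number V E + 1)) (chromatic_number V E + 1)"
    using join_extend[OF assms c] .
  then have le: "chromatic_number (join_K1_V V w) (join_K1_E V E w) \<le> chromatic_number V E + 1" by (rule chi_min)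
  obtain c' where c': "proper_colouring (join_K1_V V w) (join_K1_E V E w) c' (chromatic_number (join_K1_V V w) (join_K1_E V E w))"
    using chi_ex2[OF p] by blast
  have "c' w \<in> {1..chromatic_number (join_K1_V V w) (join_K1_E V E w)}"
    using c' unfolding proper_colouring_def join_K1_V_def by auto
  then have "1 \<le> chromatic_number (join_K1_V V w) (join_K1_E V E w)" by simp
  moreover have "chromatic_number V E \<le> chromatic_number (join_K1_V V w) (join_K1_E V E w) - 1"
    using chi_min[OF join_shrink[OF assms c']] .
  ultimately show ?thesis using le by linarith
qed

lemma nbhd_sub: "v \<in> V \<Longrightarrow> closed_nbhd V E v \<subseteq> V"
  unfolding closed_nbhd_def by auto

lemma rc_mono: "finite V \<Longrightarrow> rainbow_count V E c F \<le> rainbow_count V E c {}"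
  unfolding rainbow_count_def by (rule card_mono) auto

lemma rc_le: "finite V \<Longrightarrow> rainbow_count V E c F \<le> card V"
  unfolding rainbow_count_def by (rule card_mono) auto

lemma rc_cong: assumes "\<forall>v\<in>V. c v = d v" shows "rainbow_count V E c F = rainbow_count V E d F"
proof -
  have "{v \<in> V. \<forall>i \<in> {1..chromatic_number V E}. \<exists>u \<in> closed_nbhd V E v - F. c u = i}
      = {v \<in> V. \<forall>i \<in> {1..chromatic_number V E}. \<exists>u \<in> closed_nbhd V E v - F. d u = i}"
    using assms nbhd_sub by (smt (verit, ccfv_SIG) Collect_cong Diff_iff subsetD)
  then show ?thesis unfolding rainbow_count_def by simp
qed

lemma rc_pos:
  assumes "simple_graph V E" "V \<noteq> {}" "chromatic_colouring V E c"
  shows "rainbow_count V E c {} \<ge> 1"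
proof (rule ccontr)
  let ?k = "chromatic_number V E"
  assume "\<not> ?thesis"
  then have "rainbow_count V E c {} = 0" by simp
  moreover have "finite V" using assms sg_finite by blast
  ultimately have R: "{v \<in> V. \<forall>i \<in> {1..?k}. \<exists>u \<in> closed_nbhd V E v - {}. c u = i} = {}"
    unfolding rainbow_count_def by simp
  have miss: "\<forall>v\<in>V. \<exists>i. i \<in> {1..?k} \<and> (\<forall>u\<in>closed_nbhd V E v. c u \<noteq> i)"
  proof
    fix v assume "v \<in> V"
    then have "v \<notin> {v \<in> V. \<forall>i \<in> {1..?k}. \<exists>u \<in> closed_nbhd V E v - {}. c u = i}" using R by blast
    then show "\<exists>i. i \<in> {1..?k} \<and> (\<forall>u\<in>closed_nbhd V E v. c u \<noteq> i)" using \<open>v\<in>V\<close> by auto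
  qed
  define m where "m v = (SOME i. i \<in> {1..?k} \<and> (\<forall>u\<in>closed_nbhd V E v. c u \<noteq> i))" for v
  have m: "m v \<in> {1..?k} \<and> (\<forall>u\<in>closed_nbhd V E v. c u \<noteq> m v)" if "v \<in> V" for v
    unfolding m_def by (rule someI_ex) (rule miss[rule_format, OF that])
  have mv: "m v \<noteq> c v" if "v \<in> V" for v using m[OF that] unfolding closed_nbhd_def by auto
  have cp: "proper_colouring V E c ?k" using assms(3) unfolding chromatic_colouring_def .
  define c2 where "c2 v = (if c v = ?k then m v else c v)" for v
  have "proper_colouring V E c2 (?k - 1)"
    unfolding proper_colouring_def
  proof (intro conjI ballI impI)
    fix v assume v: "v \<in> V"
    have "c v \<in> {1..?k}" using cp v unfolding proper_colouring_def by auto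
    show "c2 v \<in> {1..?k - 1}"
    proof (cases "c v = ?k")
      case True
      then have "c2 v = m v" unfolding c2_def by simp
      moreover have "m v \<in> {1..?k}" "m v \<noteq> ?k" using m[OF v] mv[OF v] True by auto
      ultimately show ?thesis by auto
    next
      case False
      then have "c2 v = c v" unfolding c2_def by simp
      then show ?thesis using \<open>c v \<in> {1..?k}\<close> False by auto
    qed
  next
    fix u v assume u: "u \<in> V" and v: "v \<in> V" and e: "{u,v} \<in> E"
    have ne: "c u \<noteq> c v" using cp u v e unfolding proper_colouring_def by auto
    have e2: "{v,u} \<in> E" using e by (simp add: insert_commute)
    have vu: "v \<in> closed_nbhd V E u" using v e2 unfolding closed_nbhd_def by auto
    have uv: "u \<in> closed_nbhd V E v" using u e unfolding closed_nbhd_def by auto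
    show "c2 u \<noteq> c2 v"
    proof (cases "c u = ?k")
      case cu: True
      then have "c v \<noteq> ?k" using ne by simp
      then have "c2 v = c v" "c2 u = m u" unfolding c2_def using cu by auto
      moreover have "c v \<noteq> m u" using m[OF u] vu by blast
      ultimately show ?thesis by simp
    next
      case cu: False
      show ?thesis
      proof (cases "c v = ?k")
        case True
        then have "c2 v = m v" "c2 u = c u" unfolding c2_def using cu by auto
        moreover have "c u \<noteq> m v" using m[OF v] uv by blast
        ultimately show ?thesis by simp
      next
        case False
        then have "c2 v = c v" "c2 u = c u" unfolding c2_def using cu by auto
        then show ?thesis using ne by simp
      qed
    qed
  qed
  then have "?k \<le> ?k - 1" by (rule chi_min)
  then have "?k = 0" by simp
  moreover obtain v where "v \<in> V" using assms(2) by blast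
  ultimately show False using cp unfolding proper_colouring_def by auto
qed

lemma nbhd_join_w: "closed_nbhd (join_K1_V V w) (join_K1_E V E w) w = join_K1_V V w"
  unfolding closed_nbhd_def join_K1_V_def using join_edge_w2[of _ V w E] by auto

lemma nbhd_join_v:
  assumes "simple_graph V E" "w \<notin> V" "v \<in> V"
  shows "closed_nbhd (join_K1_V V w) (join_K1_E V E w) v = insert w (closed_nbhd V E v)"
proof -
  have "{u \<in> insert w V. {u, v} \<in> join_K1_E V E w} = insert w {u \<in> V. {u, v} \<in> E}"
    using join_edge_V[OF assms(1,2) _ assms(3)] join_edge_w1[OF assms(3), of w E] by auto
  then show ?thesis unfolding closed_nbhd_def join_K1_V_def by auto
qed

lemma w_faded:
  assumes "simple_graph V E" "w \<notin> V"
    and cp: "proper_colouring (join_K1_V V w) (join_K1_E V E w) c (chromatic_number V E + 1)"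
    and "w \<in> F"
  shows "rainbow_count (join_K1_V V w) (join_K1_E V E w) c F = 0"
proof -
  have cw: "c w \<in> {1..chromatic_number (join_K1_V V w) (join_K1_E V E w)}"
    using cp chi_join[OF assms(1,2)] unfolding proper_colouring_def join_K1_V_def by auto
  have "\<forall>u \<in> closed_nbhd (join_K1_V V w) (join_K1_E V E w) v - F. c u \<noteq> c w" if "v \<in> join_K1_V V w" for v
  proof
    fix u assume u: "u \<in> closed_nbhd (join_K1_V V w) (join_K1_E V E w) v - F"
    have "closed_nbhd (join_K1_V V w) (join_K1_E V E w) v \<subseteq> join_K1_V V w" using nbhd_sub[OF that] .
    then have "u \<in> V" using u assms(4) unfolding join_K1_V_def by auto
    then show "c u \<noteq> c w" using join_proper_w[OF cp] by auto
  qed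
  then have EE: "{v \<in> join_K1_V V w. \<forall>i \<in> {1..chromatic_number (join_K1_V V w) (join_K1_E V E w)}.
       \<exists>u \<in> closed_nbhd (join_K1_V V w) (join_K1_E V E w) v - F. c u = i} = {}"
    using cw by blast
  show ?thesis unfolding rainbow_count_def EE by (rule card.empty)
qed

lemma decomp:
  assumes sg: "simple_graph V E" and wV: "w \<notin> V"
    and cp: "proper_colouring (join_K1_V V w) (join_K1_E V E w) c (chromatic_number V E + 1)"
    and wF: "w \<notin> F"
  shows "rainbow_count (join_K1_V V w) (join_K1_E V E w) c F
       = rainbow_count V E (shiftc (c w) c) F
         + (if (\<forall>i\<in>{1..chromatic_number V E + 1}. \<exists>u\<in>join_K1_V V w - F. c u = i) then 1 else 0)"
proof -
  let ?k = "chromatic_number V E"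
  let ?V' = "join_K1_V V w" and ?E' = "join_K1_E V E w"
  let ?s = "shiftc (c w) c"
  let ?cov = "\<forall>i\<in>{1..?k + 1}. \<exists>u\<in>?V' - F. c u = i"
  define R' where "R' = {v \<in> ?V'. \<forall>i \<in> {1..chromatic_number ?V' ?E'}. \<exists>u \<in> closed_nbhd ?V' ?E' v - F. c u = i}"
  define R where "R = {v \<in> V. \<forall>i \<in> {1..?k}. \<exists>u \<in> closed_nbhd V E v - F. ?s u = i}"
  have chi': "chromatic_number ?V' ?E' = ?k + 1" using chi_join[OF sg wV] .
  have cw: "c w \<in> {1..?k+1}" using cp unfolding proper_colouring_def join_K1_V_def by auto
  have cv: "c v \<in> {1..?k+1}" "c v \<noteq> c w" if "v \<in> V" for v using join_proper_w[OF cp that] by auto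
  have Rw: "w \<in> R' \<longleftrightarrow> ?cov"
  proof -
    have "w \<in> R' \<longleftrightarrow> (\<forall>i \<in> {1..?k+1}. \<exists>u \<in> closed_nbhd ?V' ?E' w - F. c u = i)"
      unfolding R'_def chi' by (simp add: join_K1_V_def)
    then show ?thesis unfolding nbhd_join_w by simp
  qed
  have Rv: "v \<in> R' \<longleftrightarrow> v \<in> R" if v: "v \<in> V" for v
  proof -
    have N: "closed_nbhd ?V' ?E' v - F = insert w (closed_nbhd V E v - F)"
      using nbhd_join_v[OF sg wV v] wF by auto
    have NV: "closed_nbhd V E v \<subseteq> V" using nbhd_sub[OF v] .
    have EQ: "(\<forall>i \<in> {1..?k+1}. \<exists>u \<in> insert w (closed_nbhd V E v - F). c u = i)
        \<longleftrightarrow> (\<forall>i \<in> {1..?k}. \<exists>u \<in> closed_nbhd V E v - F. ?s u = i)"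
    proof
      assume H: "\<forall>i \<in> {1..?k+1}. \<exists>u \<in> insert w (closed_nbhd V E v - F). c u = i"
      show "\<forall>i \<in> {1..?k}. \<exists>u \<in> closed_nbhd V E v - F. ?s u = i"
      proof
        fix i assume i: "i \<in> {1..?k}"
        define i' where "i' = (if i \<ge> c w then i + 1 else i)"
        have "i' \<in> {1..?k+1}" "i' \<noteq> c w" using i unfolding i'_def by auto
        then obtain u where u: "u \<in> insert w (closed_nbhd V E v - F)" "c u = i'" using H by blast
        then have "u \<noteq> w" using \<open>i' \<noteq> c w\<close> by auto
        then have "u \<in> closed_nbhd V E v - F" using u by auto
        moreover have "?s u = i" using u(2) unfolding i'_def shiftc_def by auto
        ultimately show "\<exists>u \<in> closed_nbhd V E v - F. ?s u = i" by blast
      qed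
    next
      assume H: "\<forall>i \<in> {1..?k}. \<exists>u \<in> closed_nbhd V E v - F. ?s u = i"
      show "\<forall>i \<in> {1..?k+1}. \<exists>u \<in> insert w (closed_nbhd V E v - F). c u = i"
      proof
        fix i assume i: "i \<in> {1..?k+1}"
        show "\<exists>u \<in> insert w (closed_nbhd V E v - F). c u = i"
        proof (cases "i = c w")
          case True then show ?thesis by blast
        next
          case False
          define i0 where "i0 = (if i > c w then i - 1 else i)"
          have "i0 \<in> {1..?k}" using i cw False unfolding i0_def by auto
          then obtain u where u: "u \<in> closed_nbhd V E v - F" "?s u = i0" using H by blast
          have "u \<in> V" using u NV by auto
          have "c u = i" using u(2) cv[OF \<open>u \<in> V\<close>] False unfolding i0_def shiftc_def
            by (auto split: if_splits)
          then show ?thesis using u by blast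
        qed
      qed
    qed
    have "v \<in> R' \<longleftrightarrow> (\<forall>i \<in> {1..?k+1}. \<exists>u \<in> closed_nbhd ?V' ?E' v - F. c u = i)"
      unfolding R'_def chi' using v by (simp add: join_K1_V_def)
    also have "\<dots> \<longleftrightarrow> (\<forall>i \<in> {1..?k+1}. \<exists>u \<in> insert w (closed_nbhd V E v - F). c u = i)"
      unfolding N ..
    also have "\<dots> \<longleftrightarrow> v \<in> R" unfolding EQ R_def using v by simp
    finally show ?thesis .
  qed
  have RV: "R \<subseteq> V" unfolding R_def by auto
  have fin: "finite R" using RV sg_finite[OF sg] finite_subset by blast
  have wR: "w \<notin> R" using RV wV by auto
  have R'eq: "R' = (if ?cov then insert w R else R)"
  proof -
    have "R' \<subseteq> insert w V" unfolding R'_def join_K1_V_def by auto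
    then show ?thesis using Rw Rv RV by auto
  qed
  have "card R' = card R + (if ?cov then 1 else 0)"
    using R'eq fin wR by simp
  then show ?thesis unfolding rainbow_count_def R'_def[symmetric] R_def[symmetric] by simp
qed

lemma chromA:
  assumes "simple_graph V E" "w \<notin> V" "chromatic_colouring (join_K1_V V w) (join_K1_E V E w) c"
  shows "chromatic_colouring V E (shiftc (c w) c)"
  using join_shrink[OF assms(1,2)] assms(3) chi_join[OF assms(1,2)]
  unfolding chromatic_colouring_def by fastforce

lemma chromB:
  assumes "simple_graph V E" "w \<notin> V" "chromatic_colouring V E c"
  shows "chromatic_colouring (join_K1_V V w) (join_K1_E V E w) (c(w := chromatic_number V E + 1))"
    and "\<forall>v\<in>V. shiftc ((c(w := chromatic_number V E + 1)) w) (c(w := chromatic_number V E + 1)) v = c v"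
proof -
  show "chromatic_colouring (join_K1_V V w) (join_K1_E V E w) (c(w := chromatic_number V E + 1))"
    using join_extend[OF assms(1,2)] assms(3) chi_join[OF assms(1,2)]
    unfolding chromatic_colouring_def by fastforce
  show "\<forall>v\<in>V. shiftc ((c(w := chromatic_number V E + 1)) w) (c(w := chromatic_number V E + 1)) v = c v"
    using assms(2,3) unfolding chromatic_colouring_def proper_colouring_def shiftc_def by auto
qed

lemma chromC:
  assumes "simple_graph V E" "w \<notin> V" "chromatic_colouring (join_K1_V V w) (join_K1_E V E w) c"
  shows "rainbow_count (join_K1_V V w) (join_K1_E V E w) c {} = rainbow_count V E (shiftc (c w) c) {} + 1"
proof -
  have cp: "proper_colouring (join_K1_V V w) (join_K1_E V E w) c (chromatic_number V E + 1)"
    using assms(3) chi_join[OF assms(1,2)] unfolding chromatic_colouring_def by simp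
  have "\<forall>i\<in>{1..chromatic_number V E + 1}. \<exists>u\<in>join_K1_V V w - {}. c u = i"
    using chromatic_surj[OF assms(3)] chi_join[OF assms(1,2)] by auto
  then show ?thesis using decomp[OF assms(1,2) cp, of "{}"] by simp
qed

lemma values_eq:
  assumes "simple_graph V E" "w \<notin> V"
  shows "{rainbow_count (join_K1_V V w) (join_K1_E V E w) c {} | c. chromatic_colouring (join_K1_V V w) (join_K1_E V E w) c}
       = (\<lambda>x. x + 1) ` {rainbow_count V E c {} | c. chromatic_colouring V E c}"
proof
  show "{rainbow_count (join_K1_V V w) (join_K1_E V E w) c {} | c. chromatic_colouring (join_K1_V V w) (join_K1_E V E w) c}
       \<subseteq> (\<lambda>x. x + 1) ` {rainbow_count V E c {} | c. chromatic_colouring V E c}"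
    using chromA[OF assms] chromC[OF assms] by blast
next
  show "(\<lambda>x. x + 1) ` {rainbow_count V E c {} | c. chromatic_colouring V E c}
      \<subseteq> {rainbow_count (join_K1_V V w) (join_K1_E V E w) c {} | c. chromatic_colouring (join_K1_V V w) (join_K1_E V E w) c}"
  proof
    fix x assume "x \<in> (\<lambda>x. x + 1) ` {rainbow_count V E c {} | c. chromatic_colouring V E c}"
    then obtain c where c: "chromatic_colouring V E c" and x: "x = rainbow_count V E c {} + 1" by blast
    let ?c = "c(w := chromatic_number V E + 1)"
    have "rainbow_count (join_K1_V V w) (join_K1_E V E w) ?c {} = rainbow_count V E (shiftc (?c w) ?c) {} + 1"
      using chromC[OF assms chromB(1)[OF assms c]] .
    also have "\<dots> = x" using rc_cong[OF chromB(2)[OF assms c]] x by simp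
    finally show "x \<in> {rainbow_count (join_K1_V V w) (join_K1_E V E w) c {} | c. chromatic_colouring (join_K1_V V w) (join_K1_E V E w) c}"
      using chromB(1)[OF assms c] by (metis (mono_tags, lifting) mem_Collect_eq)
  qed
qed

lemma values_fin_ne:
  assumes "simple_graph V E"
  shows "finite {rainbow_count V E c {} | c. chromatic_colouring V E c}"
    and "{rainbow_count V E c {} | c. chromatic_colouring V E c} \<noteq> {}"
proof -
  have "{rainbow_count V E c {} | c. chromatic_colouring V E c} \<subseteq> {..card V}"
    using rc_le[OF sg_finite[OF assms]] by auto
  then show "finite {rainbow_count V E c {} | c. chromatic_colouring V E c}" using finite_subset by blast
  show "{rainbow_count V E c {} | c. chromatic_colouring V E c} \<noteq> {}"
    using chi_ex[OF assms] unfolding chromatic_colouring_def by blast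
qed

lemma r_join:
  assumes "simple_graph V E" "w \<notin> V"
  shows "r_minus (join_K1_V V w) (join_K1_E V E w) = r_minus V E + 1"
    and "r_plus (join_K1_V V w) (join_K1_E V E w) = r_plus V E + 1"
proof -
  have m: "mono (\<lambda>x::nat. x + 1)" by (simp add: mono_def)
  show "r_minus (join_K1_V V w) (join_K1_E V E w) = r_minus V E + 1"
    unfolding r_minus_def values_eq[OF assms]
    using mono_Min_commute[OF m values_fin_ne[OF assms(1)]] by simp
  show "r_plus (join_K1_V V w) (join_K1_E V E w) = r_plus V E + 1"
    unfolding r_plus_def values_eq[OF assms]
    using mono_Max_commute[OF m values_fin_ne[OF assms(1)]] by simp
qed

lemma fade_sets:
  assumes sg: "simple_graph V E" and wV: "w \<notin> V" and ne: "V \<noteq> {}"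
  shows "{card F | c F. chromatic_colouring (join_K1_V V w) (join_K1_E V E w) c \<and> F \<subseteq> join_K1_V V w \<and>
      rainbow_count (join_K1_V V w) (join_K1_E V E w) c {} = t + 1 \<and> rainbow_count (join_K1_V V w) (join_K1_E V E w) c F = t + 1}
    = {card F | c F. chromatic_colouring V E c \<and> F \<subseteq> V \<and>
      rainbow_count V E c {} = t \<and> rainbow_count V E c F = t}"
    (is "?A = ?B")
proof
  let ?k = "chromatic_number V E"
  show "?A \<subseteq> ?B"
  proof
    fix x assume "x \<in> ?A"
    then obtain c F where c: "chromatic_colouring (join_K1_V V w) (join_K1_E V E w) c"
      and F: "F \<subseteq> join_K1_V V w" and r0: "rainbow_count (join_K1_V V w) (join_K1_E V E w) c {} = t + 1"
      and rF: "rainbow_count (join_K1_V V w) (join_K1_E V E w) c F = t + 1" and x: "x = card F" by blast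
    have cp: "proper_colouring (join_K1_V V w) (join_K1_E V E w) c (?k + 1)"
      using c chi_join[OF sg wV] unfolding chromatic_colouring_def by simp
    have wF: "w \<notin> F" using w_faded[OF sg wV cp] rF by auto
    then have FV: "F \<subseteq> V" using F unfolding join_K1_V_def by auto
    let ?d = "shiftc (c w) c"
    have d: "chromatic_colouring V E ?d" using chromA[OF sg wV c] .
    have d0: "rainbow_count V E ?d {} = t" using chromC[OF sg wV c] r0 by simp
    have "rainbow_count V E ?d F \<le> rainbow_count V E ?d {}" using rc_mono[OF sg_finite[OF sg]] .
    then have dF: "rainbow_count V E ?d F = t" using decomp[OF sg wV cp wF] rF d0 by (auto split: if_splits)
    show "x \<in> ?B" using d FV d0 dF x by blast
  qed
next
  let ?k = "chromatic_number V E"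
  show "?B \<subseteq> ?A"
  proof
    fix x assume "x \<in> ?B"
    then obtain c F where c: "chromatic_colouring V E c" and FV: "F \<subseteq> V"
      and r0: "rainbow_count V E c {} = t" and rF: "rainbow_count V E c F = t" and x: "x = card F" by blast
    let ?c = "c(w := ?k + 1)"
    have c': "chromatic_colouring (join_K1_V V w) (join_K1_E V E w) ?c" using chromB(1)[OF sg wV c] .
    have cp: "proper_colouring (join_K1_V V w) (join_K1_E V E w) ?c (?k + 1)"
      using c' chi_join[OF sg wV] unfolding chromatic_colouring_def by simp
    have sh: "rainbow_count V E (shiftc (?c w) ?c) G = rainbow_count V E c G" for G
      using rc_cong[OF chromB(2)[OF sg wV c]] .
    have c0: "rainbow_count (join_K1_V V w) (join_K1_E V E w) ?c {} = t + 1"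
      using chromC[OF sg wV c'] sh r0 by simp
    have wF: "w \<notin> F" using FV wV by auto
    have "t \<ge> 1" using rc_pos[OF sg ne c] r0 by simp
    then have "rainbow_count V E c F \<noteq> 0" using rF by simp
    then have "{v \<in> V. \<forall>i \<in> {1..?k}. \<exists>u \<in> closed_nbhd V E v - F. c u = i} \<noteq> {}"
      unfolding rainbow_count_def by (metis card.empty)
    then obtain v where v: "v \<in> V" and vr: "\<forall>i \<in> {1..?k}. \<exists>u \<in> closed_nbhd V E v - F. c u = i" by blast
    have cov: "\<forall>i\<in>{1..?k + 1}. \<exists>u\<in>join_K1_V V w - F. ?c u = i"
    proof
      fix i assume i: "i \<in> {1..?k + 1}"
      show "\<exists>u\<in>join_K1_V V w - F. ?c u = i"
      proof (cases "i = ?k + 1")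
        case True then show ?thesis using wF unfolding join_K1_V_def by auto
      next
        case False
        then have "i \<in> {1..?k}" using i by auto
        then obtain u where u: "u \<in> closed_nbhd V E v - F" "c u = i" using vr by blast
        then have "u \<in> V" using nbhd_sub[OF v] by auto
        then show ?thesis using u wV unfolding join_K1_V_def by (intro bexI[of _ u]) auto
      qed
    qed
    have cF: "rainbow_count (join_K1_V V w) (join_K1_E V E w) ?c F = t + 1"
      using decomp[OF sg wV cp wF] cov sh rF by simp
    have "F \<subseteq> join_K1_V V w" using FV unfolding join_K1_V_def by auto
    then show "x \<in> ?A" using c' c0 cF x by blast
  qed
qed

theorem lemma2p3:
  fixes V :: "'a set" and E :: "'a set set" and w :: 'a
  assumes "connected_graph V E" and "w \<notin> V"
  shows "fading_minus (join_K1_V V w) (join_K1_E V E w) = fading_minus V E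
       \<and> fading_plus (join_K1_V V w) (join_K1_E V E w) = fading_plus V E"
proof -
  have sg: "simple_graph V E" and ne: "V \<noteq> {}" using assms(1) unfolding connected_graph_def by auto
  show ?thesis
    unfolding fading_minus_def fading_plus_def r_join[OF sg assms(2)] fade_sets[OF sg assms(2) ne] by simp
qed

end
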